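(* Consider a parallel system (so $\phi(s)=1$ if and only if $s_k=1$ for at least one $k$), with an arbitrary joint prior distribution of the component states, inspection error rates $\epsilon_{FA},\epsilon_{FS}\in[0,1/2)$ identical for all components, failure cost $C_F>0$ and nonnegative repair costs $C_{R,1},\dots,C_{R,N}$. Then for every component $c_k$, $\mathrm{VoI}_L(k)$ equals the global-metric value of information $\mathrm{VoI}_G(k)$ computed with the concave function $l^*(p)=\min\{C_F\,p,\ \min_m C_{R,m}\}$; consequently, for any two components with $p_i\le p_j$ we have $\mathrm{VoI}_L(i)\ge\mathrm{VoI}_L(j)$, so the most reliable component has the highest local VoI, as under the global metric.
   Context: A system consists of $N$ binary components $c_1,\dots,c_N$ with random joint state $s\in\{0,1\}^N$ ($s_k=1$: working; $s_k=0$: failed), with arbitrary prior distribution; the system state is $u=\phi(s)$ ($u=0$: failure), $p_k=\mathbb{P}[s_k=0]$. Inspecting $c_k$ yields a binary observation $y_k$ (alarm $0$, silence $1$) which, given $s$, depends only on $s_k$, with $\mathbb{P}[y_k=1\mid s_k=0]=\epsilon_{FS}$, $\mathbb{P}[y_k=0\mid s_k=1]=\epsilon_{FA}$; $h_k=\mathbb{P}[y_k=0]$, and $p_{\omega|y_k=b}=\mathbb{P}[u=0\mid y_k=b]$. Local metric: an action is a vector $A=(a_1,\dots,a_N)\in\{0,1\}^N$ ($a_k=1$: replace $c_k$). Replacement is perfect: the post-action state $s'$ has $s'_k=1$ if $a_k=1$ and $s'_k=s_k$ otherwise. The loss is $\mathcal{L}(s',A)=C_F(1-\phi(s'))+\sum_k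 a_kC_{R,k}$. The prior loss is $L^L_\pi=\min_A\mathbb{E}[\mathcal{L}(s',A)]$; the posterior loss given $y_k=c$ is $L^L_{\omega|y_k=c}=\min_A\mathbb{E}[\mathcal{L}(s',A)\mid y_k=c]$; $L^L_\omega(k)=h_kL^L_{\omega|y_k=0}+(1-h_k)L^L_{\omega|y_k=1}$; and $\mathrm{VoI}_L(k)=L^L_\pi-L^L_\omega(k)$. Global metric: for a concave $l^*:[0,1]\to\mathbb{R}$, with $p_\pi=\mathbb{P}[u=0]$, $\mathrm{VoI}_G(k)=l^*(p_\pi)-[h_k\,l^*(p_{\omega|y_k=0})+(1-h_k)\,l^*(p_{\omega|y_k=1})]$ (terms with zero probability omitted). *)

theory Defs
  imports Complex_Main
begin

text \<open>Components are indexed by a finite type 'n (N = CARD('n)).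
  A joint state is s :: 'n => bool (True = working, False = failed).
  Observations are booleans: False = alarm (y = 0), True = silence (y = 1).\<close>

definition parallel :: "('n \<Rightarrow> bool) \<Rightarrow> bool" where
  "parallel s \<longleftrightarrow> (\<exists>k. s k)"

text \<open>P[y_k = b | s_k = sk]\<close>
definition obs_lik :: "real \<Rightarrow> real \<Rightarrow> bool \<Rightarrow> bool \<Rightarrow> real" where
  "obs_lik eFA eFS sk b =
     (if sk then (if b then 1 - eFA else eFA) else (if b then eFS else 1 - eFS))"

definition prob_fail_comp :: "(('n::finite \<Rightarrow> bool) \<Rightarrow> real) \<Rightarrow> 'n \<Rightarrow> real" where
  "prob_fail_comp pr k = (\<Sum>s\<in>UNIV. if \<not> s k then pr s else 0)"

definition prob_obs :: "(('n::finite \<Rightarrow> bool) \<Rightarrow> real) \<Rightarrow> real \<Rightarrow> real \<Rightarrow> 'n \<Rightarrow> bool \<Rightarrow> real" where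
  "prob_obs pr eFA eFS k b = (\<Sum>s\<in>UNIV. pr s * obs_lik eFA eFS (s k) b)"

definition posterior :: "(('n::finite \<Rightarrow> bool) \<Rightarrow> real) \<Rightarrow> real \<Rightarrow> real \<Rightarrow> 'n \<Rightarrow> bool
    \<Rightarrow> ('n \<Rightarrow> bool) \<Rightarrow> real" where
  "posterior pr eFA eFS k b s = pr s * obs_lik eFA eFS (s k) b / prob_obs pr eFA eFS k b"

definition prob_sys_fail :: "(('n::finite \<Rightarrow> bool) \<Rightarrow> bool) \<Rightarrow> (('n \<Rightarrow> bool) \<Rightarrow> real) \<Rightarrow> real" where
  "prob_sys_fail phi q = (\<Sum>s\<in>UNIV. if \<not> phi s then q s else 0)"

definition post_state :: "('n \<Rightarrow> bool) \<Rightarrow> ('n \<Rightarrow> bool) \<Rightarrow> ('n \<Rightarrow> bool)" where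
  "post_state s A = (\<lambda>i. if A i then True else s i)"

definition loss :: "(('n::finite \<Rightarrow> bool) \<Rightarrow> bool) \<Rightarrow> real \<Rightarrow> ('n \<Rightarrow> real)
    \<Rightarrow> ('n \<Rightarrow> bool) \<Rightarrow> ('n \<Rightarrow> bool) \<Rightarrow> real" where
  "loss phi CF CR s' A = CF * (if phi s' then 0 else 1) + (\<Sum>i\<in>UNIV. if A i then CR i else 0)"

definition exp_loss :: "(('n::finite \<Rightarrow> bool) \<Rightarrow> bool) \<Rightarrow> real \<Rightarrow> ('n \<Rightarrow> real)
    \<Rightarrow> (('n \<Rightarrow> bool) \<Rightarrow> real) \<Rightarrow> ('n \<Rightarrow> bool) \<Rightarrow> real" where
  "exp_loss phi CF CR q A = (\<Sum>s\<in>UNIV. q s * loss phi CF CR (post_state s A) A)"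

definition opt_loss :: "(('n::finite \<Rightarrow> bool) \<Rightarrow> bool) \<Rightarrow> real \<Rightarrow> ('n \<Rightarrow> real)
    \<Rightarrow> (('n \<Rightarrow> bool) \<Rightarrow> real) \<Rightarrow> real" where
  "opt_loss phi CF CR q = Min ((\<lambda>A. exp_loss phi CF CR q A) ` UNIV)"

text \<open>Local-metric VoI. Zero-probability observations contribute h * L = 0.\<close>
definition VoI_L :: "(('n::finite \<Rightarrow> bool) \<Rightarrow> bool) \<Rightarrow> real \<Rightarrow> ('n \<Rightarrow> real)
    \<Rightarrow> (('n \<Rightarrow> bool) \<Rightarrow> real) \<Rightarrow> real \<Rightarrow> real \<Rightarrow> 'n \<Rightarrow> real" where
  "VoI_L phi CF CR pr eFA eFS k =
     opt_loss phi CF CR pr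
     - (prob_obs pr eFA eFS k False * opt_loss phi CF CR (posterior pr eFA eFS k False)
        + prob_obs pr eFA eFS k True * opt_loss phi CF CR (posterior pr eFA eFS k True))"

definition VoI_G :: "(real \<Rightarrow> real) \<Rightarrow> (('n::finite \<Rightarrow> bool) \<Rightarrow> bool)
    \<Rightarrow> (('n \<Rightarrow> bool) \<Rightarrow> real) \<Rightarrow> real \<Rightarrow> real \<Rightarrow> 'n \<Rightarrow> real" where
  "VoI_G l phi pr eFA eFS k =
     l (prob_sys_fail phi pr)
     - ((if prob_obs pr eFA eFS k False = 0 then 0 else
          prob_obs pr eFA eFS k False * l (prob_sys_fail phi (posterior pr eFA eFS k False)))
        + (if prob_obs pr eFA eFS k True = 0 then 0 else
          prob_obs pr eFA eFS k True * l (prob_sys_fail phi (posterior pr eFA eFS k True))))"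

definition lstar :: "real \<Rightarrow> ('n::finite \<Rightarrow> real) \<Rightarrow> real \<Rightarrow> real" where
  "lstar CF CR p = min (CF * p) (Min (range CR))"

end

theory Submission
  imports Defs
begin

lemma cost_ge:
  fixes CR :: "'n::finite \<Rightarrow> real"
  assumes CR: "\<And>m. CR m \<ge> 0" and A: "A m"
  shows "(\<Sum>i\<in>UNIV. if A i then CR i else 0) \<ge> Min (range CR)"
proof -
  have "Min (range CR) \<le> CR m" by simp
  also have "CR m = (if A m then CR m else 0)" using A by simp
  also have "\<dots> \<le> (\<Sum>i\<in>UNIV. if A i then CR i else 0)"
    by (rule member_le_sum) (auto simp: CR)
  finally show ?thesis .
qed

lemma exp_loss_par:
  fixes q :: "('n::finite \<Rightarrow> bool) \<Rightarrow> real"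
  shows "exp_loss parallel CF CR q A =
    (if (\<exists>m. A m) then (\<Sum>s\<in>UNIV. q s) * (\<Sum>i\<in>UNIV. if A i then CR i else 0)
     else CF * prob_sys_fail parallel q)"
proof (cases "\<exists>m. A m")
  case True
  then have "\<And>s. parallel (post_state s A)" by (auto simp: parallel_def post_state_def)
  then show ?thesis using True
    by (simp add: exp_loss_def loss_def sum_distrib_right)
next
  case False
  then have "A = (\<lambda>_. False)" by auto
  then show ?thesis using False
    by (auto simp: exp_loss_def loss_def post_state_def prob_sys_fail_def sum_distrib_left
        intro!: sum.cong)
qed

lemma opt_loss_par:
  fixes q :: "('n::finite \<Rightarrow> bool) \<Rightarrow> real"
  assumes CR: "\<And>m. CR m \<ge> 0" and Q: "(\<Sum>s\<in>UNIV. q s) \<ge> 0"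
  shows "opt_loss parallel CF CR q = min (CF * prob_sys_fail parallel q) ((\<Sum>s\<in>UNIV. q s) * Min (range CR))"
  unfolding opt_loss_def
proof (rule Min_eqI)
  show "finite (range (exp_loss parallel CF CR q))" by simp
next
  fix y assume "y \<in> range (exp_loss parallel CF CR q)"
  then obtain A where y: "y = exp_loss parallel CF CR q A" by auto
  show "min (CF * prob_sys_fail parallel q) ((\<Sum>s\<in>UNIV. q s) * Min (range CR)) \<le> y"
  proof (cases "\<exists>m. A m")
    case True
    then obtain m where "A m" by auto
    from cost_ge[of CR A m, OF CR this] Q have "(\<Sum>s\<in>UNIV. q s) * Min (range CR) \<le> (\<Sum>s\<in>UNIV. q s) * (\<Sum>i\<in>UNIV. if A i then CR i else 0)"
      by (simp add: mult_left_mono)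
    then show ?thesis using True y exp_loss_par[of CF CR q A] by simp
  next
    case False
    then show ?thesis using y exp_loss_par[of CF CR q A] by simp
  qed
next
  obtain m where m: "CR m = Min (range CR)"
    by (metis (mono_tags, lifting) Min_in finite_UNIV finite_imageI imageE range_eqI empty_iff)
  have e1: "exp_loss parallel CF CR q (\<lambda>i. i = m) = (\<Sum>s\<in>UNIV. q s) * Min (range CR)"
    using exp_loss_par[of CF CR q "\<lambda>i. i = m"] m by (simp add: sum.delta)
  have e2: "exp_loss parallel CF CR q (\<lambda>i. False) = CF * prob_sys_fail parallel q"
    using exp_loss_par[of CF CR q "\<lambda>i. False"] by simp
  show "min (CF * prob_sys_fail parallel q) ((\<Sum>s\<in>UNIV. q s) * Min (range CR)) \<in> range (exp_loss parallel CF CR q)"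
    by (metis e1 e2 min_def rangeI)
qed

lemma obs_lik_nonneg: "0 \<le> eFA \<Longrightarrow> eFA \<le> 1 \<Longrightarrow> 0 \<le> eFS \<Longrightarrow> eFS \<le> 1 \<Longrightarrow> obs_lik eFA eFS a b \<ge> 0"
  by (auto simp: obs_lik_def)

lemma psf_num:
  fixes pr :: "('n::finite \<Rightarrow> bool) \<Rightarrow> real"
  shows "prob_sys_fail parallel (\<lambda>s. pr s * obs_lik eFA eFS (s k) b)
     = obs_lik eFA eFS False b * prob_sys_fail parallel pr"
  unfolding prob_sys_fail_def sum_distrib_left
  by (rule sum.cong) (auto simp: parallel_def)

lemma prob_obs_False:
  fixes pr :: "('n::finite \<Rightarrow> bool) \<Rightarrow> real"
  assumes "(\<Sum>s\<in>UNIV. pr s) = 1"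
  shows "prob_obs pr eFA eFS k False = eFA * (1 - prob_fail_comp pr k) + (1 - eFS) * prob_fail_comp pr k"
proof -
  have "prob_obs pr eFA eFS k False = (\<Sum>s\<in>UNIV. eFA * pr s + (1 - eFS - eFA) * (if \<not> s k then pr s else 0))"
    unfolding prob_obs_def by (rule sum.cong) (auto simp: obs_lik_def algebra_simps)
  also have "\<dots> = eFA * (\<Sum>s\<in>UNIV. pr s) + (1 - eFS - eFA) * prob_fail_comp pr k"
    by (simp add: sum.distrib sum_distrib_left prob_fail_comp_def)
  finally show ?thesis using assms by (simp add: algebra_simps)
qed

lemma prob_obs_True:
  fixes pr :: "('n::finite \<Rightarrow> bool) \<Rightarrow> real"
  assumes "(\<Sum>s\<in>UNIV. pr s) = 1"
  shows "prob_obs pr eFA eFS k True = 1 - prob_obs pr eFA eFS k False"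
proof -
  have "prob_obs pr eFA eFS k True = (\<Sum>s\<in>UNIV. pr s - pr s * obs_lik eFA eFS (s k) False)"
    unfolding prob_obs_def by (rule sum.cong) (auto simp: obs_lik_def algebra_simps)
  then show ?thesis using assms by (simp add: sum_subtractf prob_obs_def)
qed

lemma prob_obs_nonneg:
  fixes pr :: "('n::finite \<Rightarrow> bool) \<Rightarrow> real"
  assumes "\<And>s. pr s \<ge> 0" "0 \<le> eFA" "eFA \<le> 1" "0 \<le> eFS" "eFS \<le> 1"
  shows "prob_obs pr eFA eFS k b \<ge> 0"
  unfolding prob_obs_def using assms obs_lik_nonneg
  by (intro sum_nonneg mult_nonneg_nonneg) auto

lemma F_le:
  fixes pr :: "('n::finite \<Rightarrow> bool) \<Rightarrow> real"
  assumes "\<And>s. pr s \<ge> 0"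
  shows "prob_sys_fail parallel pr \<le> prob_fail_comp pr k"
  unfolding prob_sys_fail_def prob_fail_comp_def
  by (rule sum_mono) (auto simp: parallel_def assms)

lemma F_nonneg:
  fixes pr :: "('n::finite \<Rightarrow> bool) \<Rightarrow> real"
  assumes "\<And>s. pr s \<ge> 0"
  shows "prob_sys_fail parallel pr \<ge> 0"
  unfolding prob_sys_fail_def by (rule sum_nonneg) (auto simp: assms)

lemma min_scale:
  fixes po X c CF :: real
  assumes "po > 0"
  shows "po * min (CF * (X / po)) (po / po * c) = min (CF * X) (c * po)"
    and "po * min (CF * (X / po)) c = min (CF * X) (c * po)"
  using assms by (auto simp: min_def field_simps)

lemma term_L:
  fixes pr :: "('n::finite \<Rightarrow> bool) \<Rightarrow> real"
  assumes pr: "\<And>s. pr s \<ge> 0" and e: "0 \<le> eFA" "eFA \<le> 1" "0 \<le> eFS" "eFS \<le> 1"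
    and CF: "CF > 0" and CR: "\<And>m. CR m \<ge> 0"
  shows "prob_obs pr eFA eFS k b * opt_loss parallel CF CR (posterior pr eFA eFS k b)
     = min (CF * (obs_lik eFA eFS False b * prob_sys_fail parallel pr)) (Min (range CR) * prob_obs pr eFA eFS k b)"
    and "(if prob_obs pr eFA eFS k b = 0 then 0 else prob_obs pr eFA eFS k b *
           lstar CF CR (prob_sys_fail parallel (posterior pr eFA eFS k b)))
     = min (CF * (obs_lik eFA eFS False b * prob_sys_fail parallel pr)) (Min (range CR) * prob_obs pr eFA eFS k b)"
proof -
  let ?po = "prob_obs pr eFA eFS k b"
  let ?X = "obs_lik eFA eFS False b * prob_sys_fail parallel pr"
  let ?c = "Min (range CR)"
  have po: "?po \<ge> 0" using prob_obs_nonneg[of pr eFA eFS, OF pr e] by blast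
  have X: "?X \<ge> 0" using obs_lik_nonneg[OF e] F_nonneg[of pr, OF pr] by simp
  have c: "?c \<ge> 0" using CR by (simp add: Min_ge_iff)
  have post: "posterior pr eFA eFS k b = (\<lambda>s. pr s * obs_lik eFA eFS (s k) b / ?po)"
    by (simp add: posterior_def fun_eq_iff)
  have psf: "prob_sys_fail parallel (posterior pr eFA eFS k b) = ?X / ?po"
  proof -
    have "prob_sys_fail parallel (posterior pr eFA eFS k b) =
      (\<Sum>s\<in>UNIV. (if \<not> parallel s then pr s * obs_lik eFA eFS (s k) b else 0) / ?po)"
      unfolding post prob_sys_fail_def by (rule sum.cong) auto
    also have "\<dots> = ?X / ?po"
      using psf_num[of pr eFA eFS k b] unfolding prob_sys_fail_def
      by (simp add: sum_divide_distrib[symmetric])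
    finally show ?thesis .
  qed
  have sm: "(\<Sum>s\<in>UNIV. posterior pr eFA eFS k b s) = ?po / ?po"
    unfolding post prob_obs_def by (simp add: sum_divide_distrib[symmetric])
  have sm0: "(\<Sum>s\<in>UNIV. posterior pr eFA eFS k b s) \<ge> 0" using sm po by simp
  have ol: "opt_loss parallel CF CR (posterior pr eFA eFS k b) = min (CF * (?X / ?po)) (?po / ?po * ?c)"
    using opt_loss_par[OF CR sm0, of CF] psf sm by simp
  show "?po * opt_loss parallel CF CR (posterior pr eFA eFS k b) = min (CF * ?X) (?c * ?po)"
  proof (cases "?po = 0")
    case True then show ?thesis using ol X CF c by simp
  next
    case False
    then have "?po > 0" using po by simp
    then show ?thesis unfolding ol by (rule min_scale(1))
  qed
  show "(if ?po = 0 then 0 else ?po * lstar CF CR (prob_sys_fail parallel (posterior pr eFA eFS k b)))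
        = min (CF * ?X) (?c * ?po)"
  proof (cases "?po = 0")
    case True then show ?thesis using X CF c by simp
  next
    case False
    then have "?po > 0" using po by simp
    then show ?thesis unfolding psf lstar_def using min_scale(2) False by simp
  qed
qed

lemma G_mono:
  fixes eFA eFS CF c F p p' :: real
  assumes e: "0 \<le> eFA" "eFA < 1/2" "0 \<le> eFS" "eFS < 1/2" and CF: "CF > 0" and c: "c \<ge> 0"
    and F: "0 \<le> F" "F \<le> p" and pp: "p \<le> p'" "p' \<le> 1"
  defines "h \<equiv> \<lambda>p. eFA * (1 - p) + (1 - eFS) * p"
  shows "min (CF * ((1 - eFS) * F)) (c * h p) + min (CF * (eFS * F)) (c * (1 - h p))
       \<le> min (CF * ((1 - eFS) * F)) (c * h p') + min (CF * (eFS * F)) (c * (1 - h p'))"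
proof -
  have hx: "\<And>x. h x = eFA + (1 - eFS - eFA) * x" unfolding h_def by (simp add: algebra_simps)
  have "(1 - eFS - eFA) * p \<le> (1 - eFS - eFA) * p'" using e pp by (simp add: mult_left_mono)
  then have hh: "h p \<le> h p'" unfolding hx by simp
  have "(1 - eFS - eFA) * p' \<le> (1 - eFS - eFA)" using e pp mult_left_mono[of p' 1 "1 - eFS - eFA"] by simp
  then have h1: "h p' \<le> 1" unfolding hx using e by linarith
  have id: "eFS * h p' \<le> (1 - eFS) * (1 - h p')"
  proof -
    have "(1 - eFS) * (1 - h p') - eFS * h p' = (1 - p') * (1 - eFS - eFA)"
      unfolding h_def by (simp add: algebra_simps)
    also have "\<dots> \<ge> 0" using e pp by simp
    finally show ?thesis by simp
  qed
  show ?thesis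
  proof (cases "c * (1 - h p') \<ge> CF * (eFS * F)")
    case True
    have "c * h p \<le> c * h p'" using hh c by (simp add: mult_left_mono)
    moreover have "c * (1 - h p) \<ge> c * (1 - h p')" using hh c by (simp add: mult_left_mono)
    ultimately show ?thesis using True by linarith
  next
    case False
    have pos: "eFS > 0"
    proof (rule ccontr)
      assume "\<not> eFS > 0"
      then have "eFS = 0" using e by simp
      moreover have "c * (1 - h p') \<ge> 0" using c h1 by simp
      ultimately show False using False by simp
    qed
    have a: "c * (1 - eFS) * (1 - h p') < CF * eFS * F * (1 - eFS)"
      using False e by (simp add: mult_strict_right_mono mult.commute mult.left_commute)
    have b: "c * (eFS * h p') \<le> c * ((1 - eFS) * (1 - h p'))" using id c by (simp add: mult_left_mono)
    have "eFS * (c * h p') < eFS * (CF * ((1 - eFS) * F))"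
      using a b by (simp add: algebra_simps)
    then have "c * h p' < CF * ((1 - eFS) * F)" using pos by simp
    then have "min (CF * ((1 - eFS) * F)) (c * h p') + min (CF * (eFS * F)) (c * (1 - h p')) = c"
      using False by (simp add: algebra_simps)
    moreover have "min (CF * ((1 - eFS) * F)) (c * h p) + min (CF * (eFS * F)) (c * (1 - h p)) \<le> c * h p + c * (1 - h p)"
      by (simp add: add_mono)
    ultimately show ?thesis by (simp add: algebra_simps)
  qed
qed

theorem mainTheorem4:
  fixes pr :: "('n::finite \<Rightarrow> bool) \<Rightarrow> real"
    and CR :: "'n \<Rightarrow> real"
    and CF eFA eFS :: real
  assumes pr_nonneg: "\<And>s. pr s \<ge> 0"
    and pr_sum: "(\<Sum>s\<in>UNIV. pr s) = 1"
    and eFA: "0 \<le> eFA" "eFA < 1/2"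
    and eFS: "0 \<le> eFS" "eFS < 1/2"
    and CF: "CF > 0"
    and CR: "\<And>m. CR m \<ge> 0"
  shows "(\<forall>k. VoI_L parallel CF CR pr eFA eFS k = VoI_G (lstar CF CR) parallel pr eFA eFS k)
       \<and> (\<forall>i j. prob_fail_comp pr i \<le> prob_fail_comp pr j \<longrightarrow>
             VoI_L parallel CF CR pr eFA eFS i \<ge> VoI_L parallel CF CR pr eFA eFS j)"
proof -
  let ?F = "prob_sys_fail parallel pr"
  let ?c = "Min (range CR)"
  define h where "h = (\<lambda>p. eFA * (1 - p) + (1 - eFS) * p)"
  have e: "0 \<le> eFA" "eFA \<le> 1" "0 \<le> eFS" "eFS \<le> 1" using eFA eFS by auto
  have c: "?c \<ge> 0" using CR by (simp add: Min_ge_iff)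
  have ol: "opt_loss parallel CF CR pr = lstar CF CR ?F"
    using opt_loss_par[of CR pr CF] CR pr_sum by (simp add: lstar_def)
  have po: "prob_obs pr eFA eFS k False = h (prob_fail_comp pr k)"
    "prob_obs pr eFA eFS k True = 1 - h (prob_fail_comp pr k)" for k
    using prob_obs_False[OF pr_sum] prob_obs_True[OF pr_sum] by (auto simp: h_def)
  have lk: "obs_lik eFA eFS False False = 1 - eFS" "obs_lik eFA eFS False True = eFS"
    by (auto simp: obs_lik_def)
  have VL: "VoI_L parallel CF CR pr eFA eFS k = lstar CF CR ?F -
     (min (CF * ((1 - eFS) * ?F)) (?c * h (prob_fail_comp pr k))
      + min (CF * (eFS * ?F)) (?c * (1 - h (prob_fail_comp pr k))))" for k
    unfolding VoI_L_def ol unfolding term_L(1)[of pr, OF pr_nonneg e CF CR] unfolding po lk ..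
  have VG: "VoI_G (lstar CF CR) parallel pr eFA eFS k = lstar CF CR ?F -
     (min (CF * ((1 - eFS) * ?F)) (?c * h (prob_fail_comp pr k))
      + min (CF * (eFS * ?F)) (?c * (1 - h (prob_fail_comp pr k))))" for k
    unfolding VoI_G_def unfolding term_L(2)[of pr, OF pr_nonneg e CF CR] unfolding po lk ..
  have p1: "prob_fail_comp pr k \<le> 1" for k
  proof -
    have "prob_fail_comp pr k \<le> (\<Sum>s\<in>UNIV. pr s)"
      unfolding prob_fail_comp_def by (rule sum_mono) (auto simp: pr_nonneg)
    then show ?thesis using pr_sum by simp
  qed
  have mono: "VoI_L parallel CF CR pr eFA eFS i \<ge> VoI_L parallel CF CR pr eFA eFS j"
    if "prob_fail_comp pr i \<le> prob_fail_comp pr j" for i j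
    unfolding VL h_def
    using G_mono[OF eFA eFS CF c F_nonneg[of pr, OF pr_nonneg] F_le[of pr, OF pr_nonneg] that p1]
    by (simp add: mult.commute)
  show ?thesis using VL VG mono by simp
qed

end
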